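(* Let $X_1$ and $X_2$ be independent random variables on $[0,\infty)$ with probability densities $p_1(x)$ and $p_2(x)$, respectively, and let $\theta_1,\theta_2$ be uniformly distributed on $[0,1]$, independent of each other and of $X_1,X_2$. Put $X=e^{2\pi i\theta_1}X_1+e^{2\pi i\theta_2}X_2$ and $W(s)=\mathsf{E}(|X|^s)$. Assume the variables are sufficiently nice that the quantities below are finite and differentiation in $s$ under the integral sign is permitted. Then $$ W'(0)=\mathsf{E}(\log|X|)=\int_0^\infty\!\!\int_0^\infty p_1(x)\,p_2(y)\,\max\{\log x,\log y\}\,\mathrm{d}y\,\mathrm{d}x . $$
   Context: $X$ describes a two-step random walk in the plane whose first step has length $X_1$ and second step has length $X_2$, each taken in a uniformly random direction; $W'(0)$ denotes the derivative of $W(s)$ with respect to $s$ at $s=0$. *)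

theory Defs
  imports "HOL-Probability.Probability"
begin

definition walk2 :: "real \<Rightarrow> real \<Rightarrow> real \<Rightarrow> real \<Rightarrow> complex" where
  "walk2 x1 x2 t1 t2 = cis (2 * pi * t1) * complex_of_real x1 + cis (2 * pi * t2) * complex_of_real x2"

end

theory Submission
  imports Defs
begin

lemma cos_int_zero:
  fixes n :: nat and c :: real
  assumes "n \<ge> 1"
  shows "(\<integral>t. indicator {0..1} t * cos (real n * (2*pi*t + c)) \<partial>lborel) = 0"
proof -
  have "(\<integral>t. indicator {0..1} t *\<^sub>R cos (real n * (2*pi*t + c)) \<partial>lborel)
      = sin (real n * (2*pi*1 + c)) / (2*pi*n) - sin (real n * (2*pi*0 + c)) / (2*pi*n)"
  proof (rule integral_FTC_atLeastAtMost)
    fix x :: real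
    show "((\<lambda>t. sin (real n * (2*pi*t + c)) / (2*pi*n)) has_vector_derivative cos (real n * (2*pi*x + c))) (at x within {0..1})"
      unfolding has_real_derivative_iff_has_vector_derivative[symmetric]
      using assms by (auto intro!: derivative_eq_intros simp: field_simps)
  qed (auto intro!: continuous_intros)
  also have "sin (real n * (2*pi*1 + c)) = sin (real n * c)"
  proof -
    have "real n * (2*pi*1 + c) = real n * c + 2 * real n * pi" by (simp add: algebra_simps)
    then show ?thesis by (simp add: sin_add)
  qed
  finally show ?thesis by simp
qed

lemma ln_series_cis:
  fixes r c :: real
  assumes "0 \<le> r" "r < 1"
  shows "(\<lambda>n. - ((-r)^n) * cos (real n * c) / real n) sums ln (cmod (1 + complex_of_real r * cis c))"
proof -
  have nz: "cmod (complex_of_real r * cis c) < 1" using assms by (simp add: norm_mult)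
  have "(\<lambda>n. - ((-(complex_of_real r * cis c))^n) / of_nat n) sums Ln (1 + complex_of_real r * cis c)"
    by (rule Ln_series'[OF nz])
  from sums_Re[OF this] have "(\<lambda>n. Re (- ((-(complex_of_real r * cis c))^n) / of_nat n)) sums Re (Ln (1 + complex_of_real r * cis c))" .
  moreover have "1 + complex_of_real r * cis c \<noteq> 0"
  proof
    assume "1 + complex_of_real r * cis c = 0"
    then have "complex_of_real r * cis c = -1" by (simp add: add_eq_0_iff)
    then have "cmod (complex_of_real r * cis c) = 1" by simp
    with nz show False by simp
  qed
  moreover have re: "Re (- ((-(complex_of_real r * cis c))^n) / of_nat n) = - ((-r)^n) * cos (real n * c) / real n" for n
  proof -
    have "(-(complex_of_real r * cis c))^n = (-(complex_of_real r))^n * (cis c)^n"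
      by (metis minus_mult_left power_mult_distrib)
    moreover have "(cis c)^n = cis (real n * c)" by (rule Complex.DeMoivre)
    moreover have "(-(complex_of_real r))^n = complex_of_real ((-r)^n)" by simp
    ultimately have "(-(complex_of_real r * cis c))^n = complex_of_real ((-r)^n) * cis (real n * c)"
      by (simp only:)
    then show ?thesis by (simp add: Re_divide_of_nat)
  qed
  ultimately show ?thesis
    by (metis (no_types, lifting) Re_Ln sums_cong)
qed

lemma jensen0:
  fixes r c :: real
  assumes "0 \<le> r" "r < 1"
  shows "(\<integral>t. indicator {0..1} t * ln (cmod (1 + complex_of_real r * cis (2*pi*t + c))) \<partial>lborel) = 0"
proof -
  define f where "f n t = indicator {0..1} t * ((- ((-r)^n) / real n) * cos (real n * (2*pi*t + c)))" for n t
  have eq: "indicator {0..1} t * ln (cmod (1 + complex_of_real r * cis (2*pi*t + c))) = (\<Sum>n. f n t)" for t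
  proof -
    have "(\<lambda>n. indicator {0..1} t * (- ((-r)^n) * cos (real n * (2*pi*t + c)) / real n)) sums (indicator {0..1} t * ln (cmod (1 + complex_of_real r * cis (2*pi*t + c))))"
      by (intro sums_mult ln_series_cis assms)
    then have "(\<lambda>n. f n t) sums (indicator {0..1} t * ln (cmod (1 + complex_of_real r * cis (2*pi*t + c))))"
      unfolding f_def by simp
    then show ?thesis by (simp add: sums_iff)
  qed
  have int: "integrable lborel (f n)" for n
  proof -
    have "integrable lborel (\<lambda>t. ((- ((-r)^n) / real n) * cos (real n * (2*pi*t + c))) * indicator {0..1} t)"
      by (intro borel_integrable_atLeastAtMost continuous_intros)
    then show ?thesis unfolding f_def by (simp add: mult.commute)
  qed
  have bnd: "norm (f n t) \<le> r^n * indicator {0..1} t" for n t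
  proof -
    have "\<bar>(- ((-r)^n) / real n) * cos (real n * (2*pi*t + c))\<bar> \<le> r^n"
    proof (cases "n = 0")
      case False
      have "\<bar>(- ((-r)^n) / real n) * cos (real n * (2*pi*t + c))\<bar> = r^n * \<bar>cos (real n * (2*pi*t + c))\<bar> / real n"
        using assms by (simp add: abs_mult power_abs)
      also have "\<dots> \<le> r^n * 1 / 1"
        using False assms by (intro frac_le mult_left_mono) auto
      finally show ?thesis by simp
    qed simp
    then show ?thesis unfolding f_def by (auto simp: indicator_def)
  qed
  have intbnd: "(\<integral>t. norm (f n t) \<partial>lborel) \<le> r^n" for n
  proof -
    have "(\<integral>t. norm (f n t) \<partial>lborel) \<le> (\<integral>t. r^n * indicator {0..1} (t::real) \<partial>lborel)"
      using bnd[of n] assms by (intro integral_mono') (auto intro: integrable_mult_right)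
    also have "\<dots> = r^n" by simp
    finally show ?thesis .
  qed
  have geo: "summable (\<lambda>n. r^n)" using assms by (intro summable_geometric) simp
  have summ1: "AE t in lborel. summable (\<lambda>n. norm (f n t))"
  proof (intro AE_I2 summable_comparison_test[OF _ geo] exI[of _ 0] allI impI)
    fix t :: real and n :: nat
    have "r^n * indicator {0..1} t \<le> r^n" using assms by (simp add: indicator_def)
    with bnd[of n t] show "norm (norm (f n t)) \<le> r^n" by (metis abs_idempotent order_trans real_norm_def)
  qed
  have summ2: "summable (\<lambda>n. \<integral>t. norm (f n t) \<partial>lborel)"
  proof (rule summable_comparison_test[OF _ geo], intro exI[of _ 0] allI impI)
    fix n :: nat
    have "0 \<le> (\<integral>t. norm (f n t) \<partial>lborel)" by (rule integral_nonneg_AE) simp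
    then show "norm (\<integral>t. norm (f n t) \<partial>lborel) \<le> r^n" using intbnd[of n] by simp
  qed
  have zero: "integral\<^sup>L lborel (f n) = 0" for n
  proof (cases "n = 0")
    case True
    then have "f n = (\<lambda>t. 0)" by (simp add: f_def fun_eq_iff)
    then show ?thesis by simp
  next
    case False
    have "integral\<^sup>L lborel (f n) = (- ((-r)^n) / real n) * (\<integral>t. indicator {0..1} t * cos (real n * (2*pi*t + c)) \<partial>lborel)"
      unfolding f_def by (subst integral_mult_right_zero[symmetric]) (simp add: field_simps)
    also have "\<dots> = 0" using False by (simp add: cos_int_zero)
    finally show ?thesis .
  qed
  have "(\<integral>t. indicator {0..1} t * ln (cmod (1 + complex_of_real r * cis (2*pi*t + c))) \<partial>lborel) = (\<integral>t. (\<Sum>n. f n t) \<partial>lborel)"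
    by (simp add: eq)
  also have "\<dots> = (\<Sum>n. integral\<^sup>L lborel (f n))"
    by (rule integral_suminf[OF int summ1 summ2])
  also have "\<dots> = 0" by (simp add: zero)
  finally show ?thesis .
qed

lemma isCont_cis_comp[continuous_intros]:
  fixes f :: "real \<Rightarrow> real"
  shows "isCont f t \<Longrightarrow> isCont (\<lambda>x. cis (f x)) t"
  unfolding cis_conv_exp by (intro continuous_intros)

lemma cis_shift: "cis a * cis (b - a) = cis b"
  by (simp add: cis_mult)

lemma cmod_rcis: "cmod (complex_of_real r * cis \<theta>) = \<bar>r\<bar>"
  by (simp only: norm_mult norm_of_real norm_cis mult_1_right)

lemma walk_eq1:
  assumes "0 < y" "y < x"
  shows "cmod (walk2 x y s t) = x * cmod (1 + complex_of_real (y/x) * cis (2*pi*t + - (2*pi * s)))"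
proof -
  have e: "2*pi*t + - (2*pi * s) = 2*pi*t - 2*pi * s" by simp
  have "cis (2*pi * s) * complex_of_real x * (1 + complex_of_real (y/x) * cis (2*pi*t - 2*pi * s))
      = cis (2*pi * s) * complex_of_real x + complex_of_real y * (cis (2*pi * s) * cis (2*pi*t - 2*pi * s))"
    using assms by (simp add: field_simps)
  also have "\<dots> = walk2 x y s t" by (simp only: cis_shift) (simp add: walk2_def mult.commute)
  finally have "walk2 x y s t = cis (2*pi * s) * complex_of_real x * (1 + complex_of_real (y/x) * cis (2*pi*t + - (2*pi * s)))"
    by (simp only: e)
  then show ?thesis using assms by (simp only: norm_mult norm_cis norm_of_real mult_1_left abs_of_pos)
qed

lemma walk_eq2:
  assumes "0 < x" "x < y"
  shows "cmod (walk2 x y s t) = y * cmod (1 + complex_of_real (x/y) * cis (2*pi*t + - (2*pi * s)))"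
proof -
  have "cis (2*pi * t) * complex_of_real y * (1 + complex_of_real (x/y) * cis (2*pi * s - 2*pi * t))
      = cis (2*pi * t) * complex_of_real y + complex_of_real x * (cis (2*pi * t) * cis (2*pi * s - 2*pi * t))"
    using assms by (simp add: field_simps)
  also have "\<dots> = walk2 x y s t" by (simp only: cis_shift) (simp add: walk2_def mult.commute)
  finally have "walk2 x y s t = cis (2*pi * t) * complex_of_real y * (1 + complex_of_real (x/y) * cis (2*pi * s - 2*pi * t))" ..
  then have "cmod (walk2 x y s t) = y * cmod (1 + complex_of_real (x/y) * cis (2*pi * s - 2*pi * t))"
    using assms by (simp only: norm_mult norm_cis norm_of_real mult_1_left abs_of_pos)
  also have "1 + complex_of_real (x/y) * cis (2*pi * s - 2*pi * t) = cnj (1 + complex_of_real (x/y) * cis (2*pi*t + - (2*pi * s)))"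
  proof -
    have e': "- (2*pi*t + - (2*pi * s)) = 2*pi * s - 2*pi * t" by simp
    show ?thesis by (simp only: complex_cnj_add complex_cnj_one complex_cnj_mult complex_cnj_complex_of_real cis_cnj e')
  qed
  finally show ?thesis by (simp only: complex_mod_cnj)
qed

lemma jensen_walk:
  assumes "0 < x" "0 < y" "x \<noteq> y"
  shows "(\<integral>t. indicator {0..1} t * ln (cmod (walk2 x y s t)) \<partial>lborel) = max (ln x) (ln y)"
proof -
  obtain a b where ab: "0 < b" "b < a" "max (ln x) (ln y) = ln a"
    "\<And>t. cmod (walk2 x y s t) = a * cmod (1 + complex_of_real (b/a) * cis (2*pi*t + - (2*pi * s)))"
  proof (cases "y < x")
    case True
    have "max (ln x) (ln y) = ln x" using True assms by simp
    then show ?thesis using that[of y x] True assms walk_eq1 by blast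
  next
    case False
    then have "x < y" using assms by simp
    have "max (ln x) (ln y) = ln y" using \<open>x < y\<close> assms by simp
    then show ?thesis using that[of x y] \<open>x < y\<close> assms walk_eq2 by blast
  qed
  have ba: "0 \<le> b/a" "b/a < 1" using ab by auto
  define L where "L t = ln (cmod (1 + complex_of_real (b/a) * cis (2*pi*t + - (2*pi * s))))" for t
  have nz: "1 + complex_of_real (b/a) * cis (2*pi*t + - (2*pi * s)) \<noteq> 0" for t
  proof
    assume "1 + complex_of_real (b/a) * cis (2*pi*t + - (2*pi * s)) = 0"
    then have "complex_of_real (b/a) * cis (2*pi*t + - (2*pi * s)) = -1" by (simp add: add_eq_0_iff)
    then have "cmod (complex_of_real (b/a) * cis (2*pi*t + - (2*pi * s))) = 1" by simp
    with ba show False by (simp only: cmod_rcis)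
  qed
  have pt: "indicator {0..1} t * ln (cmod (walk2 x y s t)) = ln a * indicator {0..1} t + indicator {0..1} t * L t" for t
  proof -
    have "cmod (1 + complex_of_real (b/a) * cis (2*pi*t + - (2*pi * s))) > 0" using nz[of t] by simp
    then have "ln (cmod (walk2 x y s t)) = ln a + L t"
      unfolding ab(4) L_def using ab by (simp add: ln_mult)
    then show ?thesis by (simp add: algebra_simps)
  qed
  have intL: "integrable lborel (\<lambda>t. indicator {0..1} t * L t)"
  proof -
    have "integrable lborel (\<lambda>t. L t * indicator {0..1} t)"
      unfolding L_def using nz
      by (intro borel_integrable_atLeastAtMost continuous_intros) auto
    then show ?thesis by (simp add: mult.commute)
  qed
  have "(\<integral>t. indicator {0..1} t * ln (cmod (walk2 x y s t)) \<partial>lborel)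
      = (\<integral>t. ln a * indicator {0..1} t + indicator {0..1} t * L t \<partial>lborel)"
    by (simp only: pt)
  also have "\<dots> = ln a * (\<integral>t. indicator {0..1} (t::real) \<partial>lborel) + (\<integral>t. indicator {0..1} t * L t \<partial>lborel)"
    using intL by (subst Bochner_Integration.integral_add) (auto simp: content_real)
  also have "(\<integral>t. indicator {0..1} t * L t \<partial>lborel) = 0"
    unfolding L_def using ba by (intro jensen0) auto
  finally show ?thesis using ab by (simp add: content_real)
qed

lemma ln_abs_bound:
  fixes r d :: real
  assumes "0 \<le> r" "0 < d"
  shows "\<bar>ln r\<bar> \<le> (r powr d + r powr (-d)) / d"
proof (cases "r = 0")
  case True then show ?thesis by simp
next
  case False
  then have r: "0 < r" using assms by simp
  show ?thesis
  proof (cases "1 \<le> r")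
    case True
    have "ln r \<le> r powr d / d" by (rule ln_powr_bound[OF True assms(2)])
    moreover have "r powr d / d \<le> (r powr d + r powr (-d)) / d"
      using assms by (intro divide_right_mono) auto
    moreover have "0 \<le> ln r" using True by simp
    ultimately show ?thesis by simp
  next
    case False
    have "1 \<le> inverse r" using False r by (simp add: one_le_inverse_iff)
    then have "ln (inverse r) \<le> inverse r powr d / d" by (rule ln_powr_bound[OF _ assms(2)])
    also have "inverse r powr d = r powr (-d)" using r by (simp add: inverse_powr powr_minus)
    finally have "- ln r \<le> r powr (-d) / d" using r by (simp add: ln_inverse)
    moreover have "r powr (-d) / d \<le> (r powr d + r powr (-d)) / d"
      using assms by (intro divide_right_mono) auto
    moreover have "ln r \<le> 0" using False r by simp
    ultimately show ?thesis by simp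
  qed
qed

lemma exp_minus_one_bound:
  fixes u :: real
  shows "\<bar>exp u - 1\<bar> \<le> \<bar>u\<bar> * exp \<bar>u\<bar>"
proof (cases "0 \<le> u")
  case True
  have "1 - u \<le> exp (-u)" using exp_ge_add_one_self[of "-u"] by simp
  then have "(1 - u) * exp u \<le> exp (-u) * exp u" by (intro mult_right_mono) auto
  then have "exp u - 1 \<le> u * exp u" by (simp add: exp_minus field_simps)
  moreover have "1 \<le> exp u" using True by simp
  ultimately show ?thesis using True by simp
next
  case False
  have h1: "1 - exp u \<le> -u" using exp_ge_add_one_self[of u] by linarith
  have e1: "1 \<le> exp (-u)" using False by simp
  have h2: "-u \<le> -u * exp (-u)" using False e1 by (simp add: mult_le_cancel_left1)
  have "exp u \<le> 1" using False by simp
  then have "\<bar>exp u - 1\<bar> = 1 - exp u" by simp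
  moreover have "\<bar>u\<bar> * exp \<bar>u\<bar> = -u * exp (-u)" using False by simp
  ultimately show ?thesis using h1 h2 by simp
qed

lemma dq_bound:
  fixes r d s :: real
  assumes "0 \<le> r" "0 < d" "s \<noteq> 0" "\<bar>s\<bar> \<le> d"
  shows "\<bar>(r powr s - r powr 0) / s\<bar> \<le> (r powr (2*d) + r powr (-(2*d)) + 2) / d"
proof (cases "r = 0")
  case True
  then show ?thesis using assms by simp
next
  case False
  then have r: "0 < r" using assms by simp
  define A where "A = r powr d + r powr (-d)"
  have A0: "0 \<le> A" unfolding A_def by simp
  have rs: "r powr s = exp (s * ln r)" using r by (simp add: powr_def)
  have "\<bar>r powr s - r powr 0\<bar> = \<bar>exp (s * ln r) - 1\<bar>" using r by (simp add: rs)
  also have "\<dots> \<le> \<bar>s * ln r\<bar> * exp \<bar>s * ln r\<bar>" by (rule exp_minus_one_bound)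
  also have "exp \<bar>s * ln r\<bar> \<le> A"
  proof -
    have "exp \<bar>s * ln r\<bar> \<le> exp (d * \<bar>ln r\<bar>)"
      using assms by (simp add: abs_mult mult_right_mono)
    also have "exp (d * \<bar>ln r\<bar>) \<le> A"
    proof (cases "0 \<le> ln r")
      case True
      then have "exp (d * \<bar>ln r\<bar>) = r powr d" using r by (simp add: powr_def)
      then show ?thesis unfolding A_def by simp
    next
      case False
      then have "exp (d * \<bar>ln r\<bar>) = r powr (-d)" using r by (simp add: powr_def)
      then show ?thesis unfolding A_def by simp
    qed
    finally show ?thesis .
  qed
  then have "\<bar>s * ln r\<bar> * exp \<bar>s * ln r\<bar> \<le> \<bar>s * ln r\<bar> * A"
    by (intro mult_left_mono) auto
  finally have "\<bar>r powr s - r powr 0\<bar> \<le> \<bar>s\<bar> * (\<bar>ln r\<bar> * A)" by (simp add: abs_mult)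
  then have "\<bar>(r powr s - r powr 0) / s\<bar> \<le> \<bar>ln r\<bar> * A"
    using assms by (simp add: abs_divide divide_le_eq mult.commute)
  also have "\<dots> \<le> (A / d) * A"
    using ln_abs_bound[OF assms(1,2)] A0 unfolding A_def by (intro mult_right_mono) auto
  also have "(A / d) * A = (r powr (2*d) + r powr (-(2*d)) + 2) / d"
  proof -
    have "A * A = r powr (2*d) + r powr (-(2*d)) + 2"
      unfolding A_def using r
      by (simp add: algebra_simps powr_add[symmetric])
    then show ?thesis by simp
  qed
  finally show ?thesis .
qed

lemma dq_lim:
  fixes r :: real
  assumes "0 \<le> r"
  shows "((\<lambda>s. (r powr s - r powr 0) / s) \<longlongrightarrow> ln r) (at 0)"
proof (cases "r = 0")
  case True then show ?thesis by simp
next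
  case False
  then have r: "0 < r" using assms by simp
  have "((\<lambda>s. exp (s * ln r)) has_real_derivative exp (0 * ln r) * ln r) (at 0)"
    by (auto intro!: derivative_eq_intros)
  then have "((\<lambda>s. r powr s) has_real_derivative ln r) (at 0)"
    using r by (simp add: powr_def)
  then show ?thesis unfolding has_field_derivative_iff by simp
qed

lemma deriv_moment:
  fixes M :: "'a measure" and R :: "'a \<Rightarrow> real"
  assumes P: "prob_space M" and Rm[measurable]: "R \<in> borel_measurable M" and R0: "\<And>\<omega>. 0 \<le> R \<omega>"
    and e: "0 < e" and i1: "integrable M (\<lambda>\<omega>. R \<omega> powr e)" and i2: "integrable M (\<lambda>\<omega>. R \<omega> powr (-e))"
  shows "((\<lambda>s. prob_space.expectation M (\<lambda>\<omega>. R \<omega> powr s)) has_real_derivative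
            prob_space.expectation M (\<lambda>\<omega>. ln (R \<omega>))) (at 0)"
proof -
  interpret prob_space M by fact
  define d where "d = e / 2"
  have d: "0 < d" "2 * d = e" using e by (auto simp: d_def)
  define w where "w \<omega> = (R \<omega> powr (2*d) + R \<omega> powr (-(2*d)) + 2) / d" for \<omega>
  have w_int: "integrable M w"
    unfolding w_def d(2) using i1 i2 by (intro integrable_divide Bochner_Integration.integrable_add) auto
  define DQ where "DQ s \<omega> = (R \<omega> powr s - R \<omega> powr 0) / s" for s \<omega>
  have DQ_bound: "norm (DQ s \<omega>) \<le> w \<omega>" if "s \<noteq> 0" "\<bar>s\<bar> \<le> d" for s \<omega>
    unfolding DQ_def w_def using dq_bound[OF R0 d(1) that] by simp
  have w_nonneg: "0 \<le> w \<omega>" for \<omega> unfolding w_def using d by simp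
  have DQ_int: "integrable M (DQ s)" if "s \<noteq> 0" "\<bar>s\<bar> \<le> d" for s
  proof (rule Bochner_Integration.integrable_bound[OF w_int])
    show "DQ s \<in> borel_measurable M" unfolding DQ_def by measurable
    show "AE x in M. norm (DQ s x) \<le> norm (w x)"
      using DQ_bound[OF that] w_nonneg by (intro AE_I2) (metis abs_of_nonneg real_norm_def)
  qed
  have int0: "integrable M (\<lambda>\<omega>. R \<omega> powr 0)"
    by (rule integrable_const_bound[where B=1]) auto
  have quot: "(prob_space.expectation M (\<lambda>\<omega>. R \<omega> powr s) - prob_space.expectation M (\<lambda>\<omega>. R \<omega> powr 0)) / (s - 0)
      = expectation (DQ s)" if "s \<noteq> 0" "\<bar>s\<bar> \<le> d" for s
  proof -
    have "(\<lambda>\<omega>. R \<omega> powr s) = (\<lambda>\<omega>. s * DQ s \<omega> + R \<omega> powr 0)"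
      using that by (auto simp: DQ_def fun_eq_iff)
    then have ints: "integrable M (\<lambda>\<omega>. R \<omega> powr s)"
      using DQ_int[OF that] int0 by (metis (no_types) Bochner_Integration.integrable_add integrable_mult_right)
    have "expectation (DQ s) = expectation (\<lambda>\<omega>. R \<omega> powr s - R \<omega> powr 0) / s"
      unfolding DQ_def by simp
    also have "expectation (\<lambda>\<omega>. R \<omega> powr s - R \<omega> powr 0) = expectation (\<lambda>\<omega>. R \<omega> powr s) - expectation (\<lambda>\<omega>. R \<omega> powr 0)"
      by (rule Bochner_Integration.integral_diff[OF ints int0])
    finally show ?thesis by simp
  qed
  show ?thesis
    unfolding has_field_derivative_iff tendsto_at_iff_sequentially
  proof (intro allI impI)
    fix X :: "nat \<Rightarrow> real"
    assume X0: "\<forall>i. X i \<in> UNIV - {0}" and X: "X \<longlonglongrightarrow> 0"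
    obtain N where N: "\<And>n. n \<ge> N \<Longrightarrow> \<bar>X n\<bar> < d" using LIMSEQ_D[OF X d(1)] by auto
    have XN: "X (n + N) \<noteq> 0" "\<bar>X (n + N)\<bar> \<le> d" for n using X0 N[of "n + N"] by auto
    have lim: "(\<lambda>n. expectation (DQ (X (n + N)))) \<longlonglongrightarrow> expectation (\<lambda>\<omega>. ln (R \<omega>))"
    proof (rule integral_dominated_convergence[OF _ _ w_int])
      show "(\<lambda>\<omega>. ln (R \<omega>)) \<in> borel_measurable M" by measurable
      show "DQ (X (n + N)) \<in> borel_measurable M" for n
        using DQ_int[OF XN] by (rule borel_measurable_integrable)
      show "AE \<omega> in M. norm (DQ (X (n + N)) \<omega>) \<le> w \<omega>" for n
        using DQ_bound[OF XN] by simp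
      show "AE \<omega> in M. (\<lambda>n. DQ (X (n + N)) \<omega>) \<longlonglongrightarrow> ln (R \<omega>)"
      proof (rule AE_I2)
        fix \<omega>
        have "\<forall>Y. (\<forall>i. Y i \<in> UNIV - {0}) \<longrightarrow> Y \<longlonglongrightarrow> 0 \<longrightarrow> ((\<lambda>s. (R \<omega> powr s - R \<omega> powr 0) / s) \<circ> Y) \<longlonglongrightarrow> ln (R \<omega>)"
          using dq_lim[OF R0[of \<omega>]] unfolding tendsto_at_iff_sequentially .
        moreover have "(\<lambda>n. X (n + N)) \<longlonglongrightarrow> 0" by (rule LIMSEQ_ignore_initial_segment[OF X])
        ultimately show "(\<lambda>n. DQ (X (n + N)) \<omega>) \<longlonglongrightarrow> ln (R \<omega>)"
          using XN unfolding DQ_def by (auto simp: comp_def)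
      qed
    qed
    show "((\<lambda>y. (prob_space.expectation M (\<lambda>\<omega>. R \<omega> powr y) - prob_space.expectation M (\<lambda>\<omega>. R \<omega> powr 0)) / (y - 0)) \<circ> X)
        \<longlonglongrightarrow> prob_space.expectation M (\<lambda>\<omega>. ln (R \<omega>))"
    proof (rule LIMSEQ_offset[where k=N])
      show "(\<lambda>n. ((\<lambda>y. (prob_space.expectation M (\<lambda>\<omega>. R \<omega> powr y) - prob_space.expectation M (\<lambda>\<omega>. R \<omega> powr 0)) / (y - 0)) \<circ> X) (n + N))
        \<longlonglongrightarrow> prob_space.expectation M (\<lambda>\<omega>. ln (R \<omega>))"
        using lim quot[OF XN] by (simp only: comp_def)
    qed
  qed
qed

lemma (in prob_space) indep_var_distr_map:
  assumes ind: "indep_var S A T B" and h1[measurable]: "h1 \<in> measurable S N1" and h2[measurable]: "h2 \<in> measurable T N2"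
  shows "distr M N1 (\<lambda>\<omega>. h1 (A \<omega>)) \<Otimes>\<^sub>M distr M N2 (\<lambda>\<omega>. h2 (B \<omega>)) = distr M (N1 \<Otimes>\<^sub>M N2) (\<lambda>\<omega>. (h1 (A \<omega>), h2 (B \<omega>)))"
proof -
  have rv: "random_variable S A" "random_variable T B" and eq: "distr M S A \<Otimes>\<^sub>M distr M T B = distr M (S \<Otimes>\<^sub>M T) (\<lambda>x. (A x, B x))"
    using ind unfolding indep_var_distribution_eq by auto
  note rv[measurable]
  interpret dB: prob_space "distr M N2 (\<lambda>\<omega>. h2 (B \<omega>))" by (rule prob_space_distr) simp
  have eqA: "distr M N1 (\<lambda>\<omega>. h1 (A \<omega>)) = distr (distr M S A) N1 h1" by (subst distr_distr) (auto simp: comp_def)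
  have eqB: "distr M N2 (\<lambda>\<omega>. h2 (B \<omega>)) = distr (distr M T B) N2 h2" by (subst distr_distr) (auto simp: comp_def)
  have sf: "sigma_finite_measure (distr (distr M T B) N2 h2)"
    unfolding eqB[symmetric] by (rule dB.sigma_finite_measure_axioms)
  have "distr M N1 (\<lambda>\<omega>. h1 (A \<omega>)) \<Otimes>\<^sub>M distr M N2 (\<lambda>\<omega>. h2 (B \<omega>))
      = distr (distr M S A \<Otimes>\<^sub>M distr M T B) (N1 \<Otimes>\<^sub>M N2) (\<lambda>(x, y). (h1 x, h2 y))"
    unfolding eqA eqB by (rule pair_measure_distr[OF _ _ sf]) auto
  also have "\<dots> = distr (distr M (S \<Otimes>\<^sub>M T) (\<lambda>x. (A x, B x))) (N1 \<Otimes>\<^sub>M N2) (\<lambda>(x, y). (h1 x, h2 y))"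
    by (simp only: eq)
  also have "\<dots> = distr M (N1 \<Otimes>\<^sub>M N2) (\<lambda>\<omega>. (h1 (A \<omega>), h2 (B \<omega>)))"
    by (subst distr_distr) (auto simp: comp_def)
  finally show ?thesis .
qed

lemma indep_parts:
  fixes M :: "'a measure" and X1 X2 T1 T2 :: "'a \<Rightarrow> real"
  assumes P: "prob_space M"
    and indep: "prob_space.indep_vars M (\<lambda>_. borel)
                  (\<lambda>i. if i = (0::nat) then X1 else if i = 1 then X2 else if i = 2 then T1 else T2)
                  {0, 1, 2, 3}"
  shows "distr M lborel X1 \<Otimes>\<^sub>M distr M lborel X2 = distr M (lborel \<Otimes>\<^sub>M lborel) (\<lambda>\<omega>. (X1 \<omega>, X2 \<omega>))"
    and "distr M (lborel \<Otimes>\<^sub>M lborel) (\<lambda>\<omega>. (X1 \<omega>, X2 \<omega>)) \<Otimes>\<^sub>M distr M lborel T1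
          = distr M ((lborel \<Otimes>\<^sub>M lborel) \<Otimes>\<^sub>M lborel) (\<lambda>\<omega>. ((X1 \<omega>, X2 \<omega>), T1 \<omega>))"
    and "distr M ((lborel \<Otimes>\<^sub>M lborel) \<Otimes>\<^sub>M lborel) (\<lambda>\<omega>. ((X1 \<omega>, X2 \<omega>), T1 \<omega>)) \<Otimes>\<^sub>M distr M lborel T2
          = distr M (((lborel \<Otimes>\<^sub>M lborel) \<Otimes>\<^sub>M lborel) \<Otimes>\<^sub>M lborel) (\<lambda>\<omega>. (((X1 \<omega>, X2 \<omega>), T1 \<omega>), T2 \<omega>))"
proof -
  interpret prob_space M by fact
  define Xs where "Xs = (\<lambda>i. if i = (0::nat) then X1 else if i = 1 then X2 else if i = 2 then T1 else T2)"
  have ind: "indep_vars (\<lambda>_. borel) Xs {0,1,2,3}" using indep unfolding Xs_def .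
  {
    have "indep_var (PiM {0} (\<lambda>_. borel)) (\<lambda>\<omega>. restrict (\<lambda>i. Xs i \<omega>) {0}) (PiM {1} (\<lambda>_. borel)) (\<lambda>\<omega>. restrict (\<lambda>i. Xs i \<omega>) {1})"
      by (rule indep_var_restrict[OF ind]) auto
    from indep_var_distr_map[OF this, of "\<lambda>f. f 0" lborel "\<lambda>f. f 1" lborel]
    show "distr M lborel X1 \<Otimes>\<^sub>M distr M lborel X2 = distr M (lborel \<Otimes>\<^sub>M lborel) (\<lambda>\<omega>. (X1 \<omega>, X2 \<omega>))"
      by (simp add: Xs_def)
  }
  {
    have "indep_var (PiM {0,1} (\<lambda>_. borel)) (\<lambda>\<omega>. restrict (\<lambda>i. Xs i \<omega>) {0,1}) (PiM {2} (\<lambda>_. borel)) (\<lambda>\<omega>. restrict (\<lambda>i. Xs i \<omega>) {2})"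
      by (rule indep_var_restrict[OF ind]) auto
    from indep_var_distr_map[OF this, of "\<lambda>f. (f 0, f 1)" "lborel \<Otimes>\<^sub>M lborel" "\<lambda>f. f 2" lborel]
    show "distr M (lborel \<Otimes>\<^sub>M lborel) (\<lambda>\<omega>. (X1 \<omega>, X2 \<omega>)) \<Otimes>\<^sub>M distr M lborel T1
          = distr M ((lborel \<Otimes>\<^sub>M lborel) \<Otimes>\<^sub>M lborel) (\<lambda>\<omega>. ((X1 \<omega>, X2 \<omega>), T1 \<omega>))"
      by (simp add: Xs_def)
  }
  {
    have "indep_var (PiM {0,1,2} (\<lambda>_. borel)) (\<lambda>\<omega>. restrict (\<lambda>i. Xs i \<omega>) {0,1,2}) (PiM {3} (\<lambda>_. borel)) (\<lambda>\<omega>. restrict (\<lambda>i. Xs i \<omega>) {3})"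
      by (rule indep_var_restrict[OF ind]) auto
    from indep_var_distr_map[OF this, of "\<lambda>f. ((f 0, f 1), f 2)" "(lborel \<Otimes>\<^sub>M lborel) \<Otimes>\<^sub>M lborel" "\<lambda>f. f 3" lborel]
    show "distr M ((lborel \<Otimes>\<^sub>M lborel) \<Otimes>\<^sub>M lborel) (\<lambda>\<omega>. ((X1 \<omega>, X2 \<omega>), T1 \<omega>)) \<Otimes>\<^sub>M distr M lborel T2
          = distr M (((lborel \<Otimes>\<^sub>M lborel) \<Otimes>\<^sub>M lborel) \<Otimes>\<^sub>M lborel) (\<lambda>\<omega>. (((X1 \<omega>, X2 \<omega>), T1 \<omega>), T2 \<omega>))"
      by (simp add: Xs_def)
  }
qed

lemma cis_meas[measurable]: "cis \<in> borel_measurable borel"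
  by (rule borel_measurable_continuous_onI) (unfold cis_conv_exp, intro continuous_intros)

lemma walk_meas0:
  "(\<lambda>z. ln (cmod (walk2 (fst (fst (fst z))) (snd (fst (fst z))) (snd (fst z)) (snd z)))) \<in> borel_measurable (((lborel \<Otimes>\<^sub>M lborel) \<Otimes>\<^sub>M lborel) \<Otimes>\<^sub>M (lborel::real measure))"
  unfolding walk2_def by measurable

lemma walk_meas[measurable]:
  "(\<lambda>(((x,y),s),t). ln (cmod (walk2 x y s t))) \<in> borel_measurable (((lborel \<Otimes>\<^sub>M lborel) \<Otimes>\<^sub>M lborel) \<Otimes>\<^sub>M (lborel::real measure))"
proof -
  have "(\<lambda>(((x,y),s),t). ln (cmod (walk2 x y s t))) = (\<lambda>z. ln (cmod (walk2 (fst (fst (fst z))) (snd (fst (fst z))) (snd (fst z)) (snd z))))"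
    by (auto simp: fun_eq_iff split: prod.split)
  then show ?thesis using walk_meas0 by simp
qed

lemma part2:
  fixes M :: "'a measure"
    and X1 X2 T1 T2 :: "'a \<Rightarrow> real"
    and p1 p2 :: "real \<Rightarrow> real"
  assumes P: "prob_space M"
    and indep: "prob_space.indep_vars M (\<lambda>_. borel)
                  (\<lambda>i. if i = (0::nat) then X1 else if i = 1 then X2 else if i = 2 then T1 else T2)
                  {0, 1, 2, 3}"
    and p1_meas[measurable]: "p1 \<in> borel_measurable borel" and p2_meas[measurable]: "p2 \<in> borel_measurable borel"
    and p1_nonneg: "\<forall>x. p1 x \<ge> 0" and p2_nonneg: "\<forall>x. p2 x \<ge> 0"
    and p1_supp: "\<forall>x<0. p1 x = 0" and p2_supp: "\<forall>x<0. p2 x = 0"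
    and X1_dens: "distributed M lborel X1 (\<lambda>x. ennreal (p1 x))"
    and X2_dens: "distributed M lborel X2 (\<lambda>x. ennreal (p2 x))"
    and T1_unif: "distributed M lborel T1 (indicator {0..1})"
    and T2_unif: "distributed M lborel T2 (indicator {0..1})"
    and intG: "integrable M (\<lambda>\<omega>. ln (cmod (walk2 (X1 \<omega>) (X2 \<omega>) (T1 \<omega>) (T2 \<omega>))))"
  shows "prob_space.expectation M (\<lambda>\<omega>. ln (cmod (walk2 (X1 \<omega>) (X2 \<omega>) (T1 \<omega>) (T2 \<omega>))))
            = (LINT x:{0..}|lborel. LINT y:{0..}|lborel. p1 x * p2 y * max (ln x) (ln y))"
proof -
  interpret P: prob_space M by fact
  let ?Q1 = "(lborel::real measure) \<Otimes>\<^sub>M (lborel::real measure)"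
  let ?Q2 = "?Q1 \<Otimes>\<^sub>M (lborel::real measure)"
  let ?Q3 = "?Q2 \<Otimes>\<^sub>M (lborel::real measure)"
  have sfL: "sigma_finite_measure (lborel::real measure)" by (rule lborel.sigma_finite_measure_axioms)
  have sf1: "sigma_finite_measure ?Q1" by (rule sigma_finite_pair_measure[OF sfL sfL])
  have sf2: "sigma_finite_measure ?Q2" by (rule sigma_finite_pair_measure[OF sf1 sfL])
  note ip = indep_parts[OF P indep]
  have D1: "distributed M ?Q1 (\<lambda>\<omega>. (X1 \<omega>, X2 \<omega>)) (\<lambda>(x, y). ennreal (p1 x) * ennreal (p2 y))"
    by (rule P.distributed_joint_indep'[OF sfL sfL X1_dens X2_dens ip(1)])
  have D2: "distributed M ?Q2 (\<lambda>\<omega>. ((X1 \<omega>, X2 \<omega>), T1 \<omega>))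
      (\<lambda>(a, s). (case a of (x, y) \<Rightarrow> ennreal (p1 x) * ennreal (p2 y)) * indicator {0..1} s)"
    by (rule P.distributed_joint_indep'[OF sf1 sfL D1 T1_unif ip(2)])
  have D3: "distributed M ?Q3 (\<lambda>\<omega>. (((X1 \<omega>, X2 \<omega>), T1 \<omega>), T2 \<omega>))
      (\<lambda>(b, t). (case b of (a, s) \<Rightarrow> (case a of (x, y) \<Rightarrow> ennreal (p1 x) * ennreal (p2 y)) * indicator {0..1} s) * indicator {0..1} t)"
    by (rule P.distributed_joint_indep'[OF sf2 sfL D2 T2_unif ip(3)])
  define dd :: "((real \<times> real) \<times> real) \<times> real \<Rightarrow> real" where
    "dd = (\<lambda>z. p1 (fst (fst (fst z))) * p2 (snd (fst (fst z))) * indicator {0..1} (snd (fst z)) * indicator {0..1} (snd z))"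
  have dd_meas[measurable]: "dd \<in> borel_measurable ?Q3" unfolding dd_def by measurable
  have dd_nonneg: "0 \<le> dd z" for z
    using p1_nonneg p2_nonneg by (auto simp: dd_def split: prod.split)
  have D3': "distributed M ?Q3 (\<lambda>\<omega>. (((X1 \<omega>, X2 \<omega>), T1 \<omega>), T2 \<omega>)) (\<lambda>z. ennreal (dd z))"
  proof (subst distributed_cong_density[symmetric])
    show "distributed M ?Q3 (\<lambda>\<omega>. (((X1 \<omega>, X2 \<omega>), T1 \<omega>), T2 \<omega>))
      (\<lambda>(b, t). (case b of (a, s) \<Rightarrow> (case a of (x, y) \<Rightarrow> ennreal (p1 x) * ennreal (p2 y)) * indicator {0..1} s) * indicator {0..1} t)"
      by (rule D3)
    show "AE z in ?Q3. (\<lambda>(b, t). (case b of (a, s) \<Rightarrow> (case a of (x, y) \<Rightarrow> ennreal (p1 x) * ennreal (p2 y)) * indicator {0..1} s) * indicator {0..1} t) z = ennreal (dd z)"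
      using p1_nonneg p2_nonneg
      by (intro AE_I2) (auto simp: dd_def ennreal_mult ennreal_indicator split: prod.split)
  qed measurable
  define G :: "((real \<times> real) \<times> real) \<times> real \<Rightarrow> real" where
    "G = (\<lambda>(((x,y),s),t). ln (cmod (walk2 x y s t)))"
  have G_meas[measurable]: "G \<in> borel_measurable ?Q3" unfolding G_def by (rule walk_meas)
  have intG': "integrable M (\<lambda>\<omega>. G (((X1 \<omega>, X2 \<omega>), T1 \<omega>), T2 \<omega>))"
    using intG by (simp add: G_def)
  have I3: "integrable ?Q3 (\<lambda>z. dd z * G z)"
    using distributed_integrable[OF D3' G_meas] dd_nonneg intG' by simp
  have E3: "P.expectation (\<lambda>\<omega>. ln (cmod (walk2 (X1 \<omega>) (X2 \<omega>) (T1 \<omega>) (T2 \<omega>)))) = (\<integral>z. dd z * G z \<partial>?Q3)"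
    using distributed_integral[OF D3' G_meas] dd_nonneg by (simp add: G_def)
  interpret pQ3: pair_sigma_finite ?Q2 "lborel::real measure" by (intro pair_sigma_finite.intro sf2 sfL)
  interpret pQ2: pair_sigma_finite ?Q1 "lborel::real measure" by (intro pair_sigma_finite.intro sf1 sfL)
  have S3: "(\<integral>z. dd z * G z \<partial>?Q3) = (\<integral>a. (\<integral>t. dd (a,t) * G (a,t) \<partial>lborel) \<partial>?Q2)"
    using pQ3.integral_fst'[OF I3] by simp
  have I2a: "integrable ?Q2 (\<lambda>a. \<integral>t. dd (a,t) * G (a,t) \<partial>lborel)"
    using pQ3.integrable_fst'[OF I3] by simp
  define F2 :: "(real \<times> real) \<times> real \<Rightarrow> real" where
    "F2 a = p1 (fst (fst a)) * p2 (snd (fst a)) * indicator {0..1} (snd a) * max (ln (fst (fst a))) (ln (snd (fst a)))" for a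
  have F2_meas[measurable]: "F2 \<in> borel_measurable ?Q2" unfolding F2_def by measurable
  have inner3: "(\<integral>t. dd (a,t) * G (a,t) \<partial>lborel) = F2 a"
    if a: "fst (fst a) \<noteq> 0" "snd (fst a) \<noteq> 0" "fst (fst a) \<noteq> snd (fst a)" for a
  proof -
    obtain x y s where axy: "a = ((x, y), s)" by (metis prod.collapse)
    have xy: "x \<noteq> 0" "y \<noteq> 0" "x \<noteq> y" using a by (auto simp: axy)
    define c where "c = p1 x * p2 y * indicator {0..1} s"
    have "(\<integral>t. dd (a,t) * G (a,t) \<partial>lborel) = (\<integral>t. c * (indicator {0..1} t * ln (cmod (walk2 x y s t))) \<partial>lborel)"
      by (simp add: axy dd_def G_def c_def mult.assoc)
    also have "\<dots> = c * (\<integral>t. indicator {0..1} t * ln (cmod (walk2 x y s t)) \<partial>lborel)"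
      by (rule integral_mult_right_zero)
    also have "\<dots> = F2 a"
    proof (cases "0 < x \<and> 0 < y")
      case True
      then show ?thesis using jensen_walk[of x y s] xy by (simp add: c_def F2_def axy)
    next
      case False
      then have "x < 0 \<or> y < 0" using xy by auto
      then have "p1 x * p2 y = 0" using p1_supp p2_supp by auto
      then show ?thesis by (simp add: c_def F2_def axy)
    qed
    finally show ?thesis .
  qed
  have AE1: "AE b in ?Q1. fst b \<noteq> 0 \<and> snd b \<noteq> 0 \<and> fst b \<noteq> snd b"
  proof (rule lborel_pair.AE_pair_measure)
    show "{b \<in> space ?Q1. fst b \<noteq> 0 \<and> snd b \<noteq> 0 \<and> fst b \<noteq> snd b} \<in> sets ?Q1" by measurable
    show "AE x in lborel. AE y in lborel. fst (x, y) \<noteq> 0 \<and> snd (x, y) \<noteq> (0::real) \<and> fst (x, y) \<noteq> snd (x, y)"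
      using AE_lborel_singleton[of "0::real"]
    proof eventually_elim
      case (elim x)
      show ?case using AE_lborel_singleton[of "0::real"] AE_lborel_singleton[of x]
        by eventually_elim (use elim in auto)
    qed
  qed
  have AE2: "AE a in ?Q2. fst (fst a) \<noteq> 0 \<and> snd (fst a) \<noteq> 0 \<and> fst (fst a) \<noteq> snd (fst a)"
  proof (rule pQ2.AE_pair_measure)
    show "{a \<in> space ?Q2. fst (fst a) \<noteq> 0 \<and> snd (fst a) \<noteq> 0 \<and> fst (fst a) \<noteq> snd (fst a)} \<in> sets ?Q2" by measurable
    show "AE b in ?Q1. AE s in lborel. fst (fst (b, s)) \<noteq> 0 \<and> snd (fst (b, s)) \<noteq> 0 \<and> fst (fst (b, s)) \<noteq> snd (fst (b, s))"
      using AE1 by eventually_elim simp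
  qed
  have AE3: "AE a in ?Q2. (\<integral>t. dd (a,t) * G (a,t) \<partial>lborel) = F2 a"
    using AE2 by eventually_elim (rule inner3, auto)
  have E23: "(\<integral>a. (\<integral>t. dd (a,t) * G (a,t) \<partial>lborel) \<partial>?Q2) = (\<integral>a. F2 a \<partial>?Q2)"
    by (rule integral_cong_AE[OF borel_measurable_integrable[OF I2a] F2_meas AE3])
  have I2: "integrable ?Q2 F2"
    using integrable_cong_AE[OF borel_measurable_integrable[OF I2a] F2_meas AE3] I2a by simp
  define F1 :: "real \<times> real \<Rightarrow> real" where
    "F1 b = p1 (fst b) * p2 (snd b) * max (ln (fst b)) (ln (snd b))" for b
  have inner2: "(\<integral>s. F2 (b, s) \<partial>lborel) = F1 b" for b
  proof -
    have "(\<integral>s. F2 (b, s) \<partial>lborel) = (\<integral>s. F1 b * indicator {0..1} (s::real) \<partial>lborel)"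
      by (rule Bochner_Integration.integral_cong[OF refl]) (simp add: F2_def F1_def mult_ac)
    also have "\<dots> = F1 b * (\<integral>s. indicator {0..1} (s::real) \<partial>lborel)"
      by (rule integral_mult_right_zero)
    also have "\<dots> = F1 b" by (simp add: content_real)
    finally show ?thesis .
  qed
  have S2: "(\<integral>a. F2 a \<partial>?Q2) = (\<integral>b. F1 b \<partial>?Q1)"
    using pQ2.integral_fst'[OF I2] inner2 by simp
  have I1: "integrable ?Q1 F1"
    using pQ2.integrable_fst'[OF I2] inner2 by simp
  have S1: "(\<integral>b. F1 b \<partial>?Q1) = (\<integral>x. (\<integral>y. F1 (x, y) \<partial>lborel) \<partial>lborel)"
    using lborel_pair.integral_fst'[OF I1] by simp
  have fin: "(\<integral>x. (\<integral>y. F1 (x, y) \<partial>lborel) \<partial>lborel) = (LINT x:{0..}|lborel. LINT y:{0..}|lborel. p1 x * p2 y * max (ln x) (ln y))"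
    unfolding set_lebesgue_integral_def
  proof (rule Bochner_Integration.integral_cong[OF refl])
    fix x :: real
    have "(\<integral>y. indicator {0..} y *\<^sub>R (p1 x * p2 y * max (ln x) (ln y)) \<partial>lborel) = (\<integral>y. F1 (x, y) \<partial>lborel)"
      by (rule Bochner_Integration.integral_cong[OF refl]) (use p2_supp in \<open>auto simp: F1_def indicator_def\<close>)
    then show "(\<integral>y. F1 (x, y) \<partial>lborel) = indicator {0..} x *\<^sub>R (\<integral>y. indicator {0..} y *\<^sub>R (p1 x * p2 y * max (ln x) (ln y)) \<partial>lborel)"
      using p1_supp by (auto simp: F1_def indicator_def)
  qed
  show ?thesis using E3 S3 E23 S2 S1 fin by simp
qed

theorem lemma1:
  fixes M :: "'a measure"
    and X1 X2 T1 T2 :: "'a \<Rightarrow> real"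
    and p1 p2 :: "real \<Rightarrow> real"
    and W :: "real \<Rightarrow> real"
  assumes "prob_space M"
    and indep: "prob_space.indep_vars M (\<lambda>_. borel)
                  (\<lambda>i. if i = (0::nat) then X1 else if i = 1 then X2 else if i = 2 then T1 else T2)
                  {0, 1, 2, 3}"
    and p1_meas: "p1 \<in> borel_measurable borel" and p2_meas: "p2 \<in> borel_measurable borel"
    and p1_nonneg: "\<forall>x. p1 x \<ge> 0" and p2_nonneg: "\<forall>x. p2 x \<ge> 0"
    and p1_supp: "\<forall>x<0. p1 x = 0" and p2_supp: "\<forall>x<0. p2 x = 0"
    and X1_dens: "distributed M lborel X1 (\<lambda>x. ennreal (p1 x))"
    and X2_dens: "distributed M lborel X2 (\<lambda>x. ennreal (p2 x))"
    and T1_unif: "distributed M lborel T1 (indicator {0..1})"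
    and T2_unif: "distributed M lborel T2 (indicator {0..1})"
    and W_def: "\<forall>s. W s = prob_space.expectation M
                  (\<lambda>\<omega>. cmod (walk2 (X1 \<omega>) (X2 \<omega>) (T1 \<omega>) (T2 \<omega>)) powr s)"
    and nice: "\<exists>\<epsilon>>0. integrable M (\<lambda>\<omega>. cmod (walk2 (X1 \<omega>) (X2 \<omega>) (T1 \<omega>) (T2 \<omega>)) powr \<epsilon>)
                   \<and> integrable M (\<lambda>\<omega>. cmod (walk2 (X1 \<omega>) (X2 \<omega>) (T1 \<omega>) (T2 \<omega>)) powr (-\<epsilon>))"
  shows "(W has_real_derivative
            prob_space.expectation M (\<lambda>\<omega>. ln (cmod (walk2 (X1 \<omega>) (X2 \<omega>) (T1 \<omega>) (T2 \<omega>))))) (at 0)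
         \<and> prob_space.expectation M (\<lambda>\<omega>. ln (cmod (walk2 (X1 \<omega>) (X2 \<omega>) (T1 \<omega>) (T2 \<omega>))))
            = (LINT x:{0..}|lborel. LINT y:{0..}|lborel. p1 x * p2 y * max (ln x) (ln y))"
proof -
  interpret P: prob_space M by fact
  obtain e where e: "0 < e" and i1: "integrable M (\<lambda>\<omega>. cmod (walk2 (X1 \<omega>) (X2 \<omega>) (T1 \<omega>) (T2 \<omega>)) powr e)"
    and i2: "integrable M (\<lambda>\<omega>. cmod (walk2 (X1 \<omega>) (X2 \<omega>) (T1 \<omega>) (T2 \<omega>)) powr (-e))"
    using nice by blast
  have [measurable]: "X1 \<in> borel_measurable M" "X2 \<in> borel_measurable M" "T1 \<in> borel_measurable M" "T2 \<in> borel_measurable M"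
    using X1_dens X2_dens T1_unif T2_unif by (auto dest!: distributed_measurable)
  note [measurable] = p1_meas p2_meas
  define R where "R \<omega> = cmod (walk2 (X1 \<omega>) (X2 \<omega>) (T1 \<omega>) (T2 \<omega>))" for \<omega>
  have Rm[measurable]: "R \<in> borel_measurable M"
    unfolding R_def walk2_def by measurable
  have W_eq: "W = (\<lambda>s. P.expectation (\<lambda>\<omega>. R \<omega> powr s))"
    using W_def unfolding R_def by auto
  have part1: "(W has_real_derivative P.expectation (\<lambda>\<omega>. ln (R \<omega>))) (at 0)"
    unfolding W_eq by (rule deriv_moment[OF \<open>prob_space M\<close> Rm _ e i1[folded R_def] i2[folded R_def]]) (simp add: R_def)
  have intG: "integrable M (\<lambda>\<omega>. ln (R \<omega>))"
  proof (rule Bochner_Integration.integrable_bound)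
    show "integrable M (\<lambda>\<omega>. (R \<omega> powr e + R \<omega> powr (-e)) / e)"
      using i1 i2 unfolding R_def by (intro integrable_divide Bochner_Integration.integrable_add)
    show "(\<lambda>\<omega>. ln (R \<omega>)) \<in> borel_measurable M" by measurable
    show "AE \<omega> in M. norm (ln (R \<omega>)) \<le> norm ((R \<omega> powr e + R \<omega> powr (-e)) / e)"
    proof (rule AE_I2)
      fix \<omega>
      have "\<bar>ln (R \<omega>)\<bar> \<le> (R \<omega> powr e + R \<omega> powr (-e)) / e"
        by (rule ln_abs_bound[OF _ e]) (simp add: R_def)
      also have "\<dots> \<le> \<bar>(R \<omega> powr e + R \<omega> powr (-e)) / e\<bar>" by (rule abs_ge_self)
      finally show "norm (ln (R \<omega>)) \<le> norm ((R \<omega> powr e + R \<omega> powr (-e)) / e)" by simp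
    qed
  qed
  have part2: "P.expectation (\<lambda>\<omega>. ln (R \<omega>)) = (LINT x:{0..}|lborel. LINT y:{0..}|lborel. p1 x * p2 y * max (ln x) (ln y))"
    unfolding R_def
    by (rule part2[OF \<open>prob_space M\<close> indep p1_meas p2_meas p1_nonneg p2_nonneg p1_supp p2_supp
          X1_dens X2_dens T1_unif T2_unif intG[unfolded R_def]])
  show ?thesis using part1 part2 unfolding R_def by simp
qed

end
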